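(* Let $m\ge n$, $B\in\mathbb R^{n\times m}$ of full row rank, $f,h$ convex and continuously differentiable with Lipschitz gradients, $\mathcal L(u,p)=f(u)-h(p)+(Bu,p)$ with saddle point $(u^*,p^* )$, and $\mathcal I_{\mathcal V},\mathcal I_{\mathcal Q}$ symmetric positive definite. Suppose $f\in\mathcal S^{1,1}_{\mu_{f,\mathcal I_{\mathcal V}},L_{f,\mathcal I_{\mathcal V}}}$ with respect to $\mathcal I_{\mathcal V}$ with $0<\mu_{f,\mathcal I_{\mathcal V}}\le L_{f,\mathcal I_{\mathcal V}}<2$. Let $(u_k,p_k)_{k\ge0}$ satisfy the implicit Euler scheme $$u_{k+1}=u_k+\alpha_k\mathcal G^u(u_{k+1},p_{k+1}),\qquad p_{k+1}=p_k+\alpha_k\mathcal G^p(u_{k+1},p_{k+1})$$ with step sizes $\alpha_k>0$. Then for every $\alpha_k>0$ and $k\ge0$, $$\mathcal E(u_{k+1},p_{k+1})\le\frac{1}{1+\alpha_k\mu}\mathcal E(u_k,p_k),$$ where $\mu=\min\{\mu_{\mathcal V},\mu_{\mathcal Q}\}$.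
   Context: For SPD $M$, $\|x\|_M=(Mx,x)^{1/2}$; $D_g(y,x)=g(y)-g(x)-(\nabla g(x),y-x)$; $g\in\mathcal S^{1,1}_{\mu_{g,M},L_{g,M}}$ w.r.t. $M$ means $\frac{\mu_{g,M}}2\|x-y\|_M^2\le D_g(y,x)\le\frac{L_{g,M}}2\|x-y\|_M^2$ for all $x,y$. A saddle point satisfies $\nabla f(u^* )+B^\top p^*=0$, $Bu^*=\nabla h(p^* )$. Define $e(u)=u-\mathcal I_{\mathcal V}^{-1}\nabla f(u)$, $h_B(p)=h(p)+\frac12(B\mathcal I_{\mathcal V}^{-1}B^\top p,p)$, $\mathcal G^u(u,p)=-\mathcal I_{\mathcal V}^{-1}(\nabla f(u)+B^\top p)$, $\mathcal G^p(u,p)=-\mathcal I_{\mathcal Q}^{-1}(\nabla h_B(p)-Be(u))$, and $\mathcal E(u,p)=\frac12\|u-u^*\|^2_{\mathcal I_{\mathcal V}}+\frac12\|p-p^*\|^2_{\mathcal I_{\mathcal Q}}$. Constants: $\mu_{\mathcal V}=\mu_{f,\mathcal I_{\mathcal V}}$, $\mu_{\mathcal Q}=(2-L_{f,\mathcal I_{\mathcal V}})\mu_{h_B,\mathcal I_{\mathcal Q}}$, where $\mu_{h_B,\mathcal I_{\mathcal Q}}$ is the strong convexity constant of $h_B$ with respect to $\mathcal I_{\mathcal Q}$. *)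

theory Defs
  imports "HOL-Analysis.Analysis"
begin

definition sq_normM :: "real^'n^'n \<Rightarrow> real^'n \<Rightarrow> real" where
  "sq_normM M x = (M *v x) \<bullet> x"

definition normM :: "real^'n^'n \<Rightarrow> real^'n \<Rightarrow> real" where
  "normM M x = sqrt (sq_normM M x)"

definition SPD :: "real^'n^'n \<Rightarrow> bool" where
  "SPD M \<longleftrightarrow> transpose M = M \<and> (\<forall>x. x \<noteq> 0 \<longrightarrow> (M *v x) \<bullet> x > 0)"

definition bregman :: "('n \<Rightarrow> real) \<Rightarrow> ('n \<Rightarrow> 'n::real_inner) \<Rightarrow> 'n \<Rightarrow> 'n \<Rightarrow> real" where
  "bregman g gg y x = g y - g x - gg x \<bullet> (y - x)"

definition in_S11 :: "(real^'n \<Rightarrow> real) \<Rightarrow> (real^'n \<Rightarrow> real^'n) \<Rightarrow> real^'n^'n \<Rightarrow> real \<Rightarrow> real \<Rightarrow> bool" where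
  "in_S11 g gg M mu L \<longleftrightarrow> (\<forall>x y. mu / 2 * (normM M (x - y))^2 \<le> bregman g gg y x
                                 \<and> bregman g gg y x \<le> L / 2 * (normM M (x - y))^2)"

definition strongly_convex_wrt :: "(real^'n \<Rightarrow> real) \<Rightarrow> (real^'n \<Rightarrow> real^'n) \<Rightarrow> real^'n^'n \<Rightarrow> real \<Rightarrow> bool" where
  "strongly_convex_wrt g gg M mu \<longleftrightarrow> (\<forall>x y. mu / 2 * (normM M (x - y))^2 \<le> bregman g gg y x)"

definition is_gradient :: "(real^'n \<Rightarrow> real) \<Rightarrow> (real^'n \<Rightarrow> real^'n) \<Rightarrow> bool" where
  "is_gradient g gg \<longleftrightarrow> (\<forall>x. (g has_derivative (\<lambda>v. gg x \<bullet> v)) (at x))"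

definition hB :: "(real^'n \<Rightarrow> real) \<Rightarrow> real^'m^'n \<Rightarrow> real^'m^'m \<Rightarrow> real^'n \<Rightarrow> real" where
  "hB h B IV p = h p + 1/2 * (((B ** matrix_inv IV ** transpose B) *v p) \<bullet> p)"

definition grad_hB :: "(real^'n \<Rightarrow> real^'n) \<Rightarrow> real^'m^'n \<Rightarrow> real^'m^'m \<Rightarrow> real^'n \<Rightarrow> real^'n" where
  "grad_hB gh B IV p = gh p + (B ** matrix_inv IV ** transpose B) *v p"

definition e_map :: "(real^'m \<Rightarrow> real^'m) \<Rightarrow> real^'m^'m \<Rightarrow> real^'m \<Rightarrow> real^'m" where
  "e_map gf IV u = u - matrix_inv IV *v gf u"

definition Gu :: "(real^'m \<Rightarrow> real^'m) \<Rightarrow> real^'m^'n \<Rightarrow> real^'m^'m \<Rightarrow> real^'m \<Rightarrow> real^'n \<Rightarrow> real^'m" where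
  "Gu gf B IV u p = - (matrix_inv IV *v (gf u + transpose B *v p))"

definition Gp :: "(real^'m \<Rightarrow> real^'m) \<Rightarrow> (real^'n \<Rightarrow> real^'n) \<Rightarrow> real^'m^'n \<Rightarrow> real^'m^'m \<Rightarrow> real^'n^'n
                   \<Rightarrow> real^'m \<Rightarrow> real^'n \<Rightarrow> real^'n" where
  "Gp gf gh B IV IQ u p = - (matrix_inv IQ *v (grad_hB gh B IV p - B *v e_map gf IV u))"

definition lyap :: "real^'m^'m \<Rightarrow> real^'n^'n \<Rightarrow> real^'m \<Rightarrow> real^'n \<Rightarrow> real^'m \<Rightarrow> real^'n \<Rightarrow> real" where
  "lyap IV IQ us ps u p = 1/2 * (normM IV (u - us))^2 + 1/2 * (normM IQ (p - ps))^2"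

end

theory Submission imports Defs begin

lemma dot_transp: "((A::real^'a^'b) *v x) \<bullet> y = x \<bullet> (transpose A *v y)"
  by (metis inner_commute dot_lmul_matrix transpose_matrix_vector)

lemma sq_nonneg: "SPD M \<Longrightarrow> sq_normM M v \<ge> 0"
  unfolding SPD_def sq_normM_def by (cases "v = 0") (auto intro: less_imp_le)

lemma norm_sq: "SPD M \<Longrightarrow> (normM M v)^2 = sq_normM M v"
  unfolding normM_def using sq_nonneg by simp

lemma sq_scale: "sq_normM M (c *\<^sub>R v) = c^2 * sq_normM M v"
  unfolding sq_normM_def by (simp add: matrix_vector_mult_scaleR power2_eq_square)

lemma sq_neg: "sq_normM M (x - y) = sq_normM M (y - x)"
proof -
  have "x - y = (-1) *\<^sub>R (y - x)" by simp
  thus ?thesis by (simp only: sq_scale) simp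
qed

lemma spd_inv:
  fixes M :: "real^'n^'n"
  assumes "SPD M"
  shows "M ** matrix_inv M = mat 1" "matrix_inv M ** M = mat 1"
    "transpose (matrix_inv M) = matrix_inv M"
proof -
  have ker: "\<forall>x. M *v x = 0 \<longrightarrow> x = 0"
    using assms unfolding SPD_def by (metis inner_zero_left less_irrefl)
  hence "invertible M" using matrix_left_invertible_ker invertible_left_inverse by blast
  hence ex: "\<exists>A'. M ** A' = mat 1 \<and> A' ** M = mat 1" unfolding invertible_def .
  show 1: "M ** matrix_inv M = mat 1" and 2: "matrix_inv M ** M = mat 1"
    unfolding matrix_inv_def using someI_ex[OF ex] by auto
  have tM: "transpose M = M" using assms unfolding SPD_def by simp
  have "transpose (matrix_inv M) ** M = mat 1"
    by (metis 1 matrix_transpose_mul tM transpose_mat)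
  hence "transpose (matrix_inv M) = transpose (matrix_inv M) ** (M ** matrix_inv M)"
    using 1 by simp
  also have "\<dots> = matrix_inv M"
    by (simp add: matrix_mul_assoc \<open>transpose (matrix_inv M) ** M = mat 1\<close>)
  finally show "transpose (matrix_inv M) = matrix_inv M" .
qed

lemma inv_psd:
  fixes M :: "real^'n^'n"
  assumes "SPD M"
  shows "(matrix_inv M *v v) \<bullet> v \<ge> 0"
proof -
  have "v = M *v (matrix_inv M *v v)"
    by (simp add: matrix_vector_mul_assoc spd_inv[OF assms])
  hence "(matrix_inv M *v v) \<bullet> v = sq_normM M (matrix_inv M *v v)"
    unfolding sq_normM_def by (metis inner_commute)
  thus ?thesis using sq_nonneg[OF assms] by simp
qed

lemma breg_sum: "bregman g gg y x + bregman g gg x y = (gg y - gg x) \<bullet> (y - x)"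
  unfolding bregman_def by (simp add: algebra_simps inner_diff_left inner_diff_right)

lemma convex_breg:
  fixes h :: "real^'n \<Rightarrow> real"
  assumes cv: "convex_on UNIV h" and gr: "is_gradient h gh"
  shows "bregman h gh y x \<ge> 0"
proof -
  define \<phi> where "\<phi> t = h (x + t *\<^sub>R (y - x))" for t :: real
  have "convex_on UNIV \<phi>"
    unfolding convex_on_def \<phi>_def
  proof (intro conjI ballI allI impI convex_UNIV)
    fix t t' u s :: real assume "0 \<le> u" "0 \<le> s" "u + s = 1"
    have "x + (u * t + s * t') *\<^sub>R (y - x) = u *\<^sub>R (x + t *\<^sub>R (y - x)) + s *\<^sub>R (x + t' *\<^sub>R (y - x))"
    proof -
      have "x = u *\<^sub>R x + s *\<^sub>R x" using \<open>u + s = 1\<close> by (metis scaleR_add_left scaleR_one)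
      thus ?thesis by (simp add: algebra_simps)
    qed
    note eq = this
    have us: "1 - s = u" using \<open>u + s = 1\<close> by simp
    have le: "h (u *\<^sub>R (x + t *\<^sub>R (y - x)) + s *\<^sub>R (x + t' *\<^sub>R (y - x))) \<le> u * h (x + t *\<^sub>R (y - x)) + s * h (x + t' *\<^sub>R (y - x))"
      using convex_onD[OF cv, of s "x + t *\<^sub>R (y - x)" "x + t' *\<^sub>R (y - x)"] \<open>0 \<le> u\<close> \<open>0 \<le> s\<close> \<open>u + s = 1\<close>
      unfolding us by simp
    show "h (x + (u *\<^sub>R t + s *\<^sub>R t') *\<^sub>R (y - x)) \<le> u * h (x + t *\<^sub>R (y - x)) + s * h (x + t' *\<^sub>R (y - x))"
      using le eq by simp
  qed
  have d1: "((\<lambda>t. x + t *\<^sub>R (y - x)) has_derivative (\<lambda>t. t *\<^sub>R (y - x))) (at 0)"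
    by (auto intro!: derivative_eq_intros)
  have d2: "(h has_derivative (\<lambda>v. gh x \<bullet> v)) (at (x + 0 *\<^sub>R (y - x)))"
    using gr unfolding is_gradient_def by simp
  have "(\<phi> has_derivative (\<lambda>t. gh x \<bullet> (t *\<^sub>R (y - x)))) (at 0)"
    unfolding \<phi>_def using has_derivative_compose[OF d1 d2] by (simp add: o_def)
  hence "(\<phi> has_field_derivative (gh x \<bullet> (y - x))) (at 0)"
    unfolding has_field_derivative_def by (simp add: mult.commute[of _ "gh x \<bullet> (y - x)"])
  from convex_on_imp_above_tangent[OF \<open>convex_on UNIV \<phi>\<close> connected_UNIV _ _ , of 0 1, simplified, OF this]
  have "\<phi> 1 - \<phi> 0 \<ge> gh x \<bullet> (y - x)" by simp
  thus ?thesis unfolding bregman_def \<phi>_def by simp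
qed


lemma cocoer_half:
  fixes f :: "real^'n \<Rightarrow> real" and M :: "real^'n^'n"
  assumes S: "in_S11 f gf M mu L" and spd: "SPD M" and mu: "0 < mu" and L: "0 < L"
  shows "bregman f gf x2 x1 \<ge> 1/(2*L) * ((matrix_inv M *v (gf x2 - gf x1)) \<bullet> (gf x2 - gf x1))"
proof -
  define Vi where "Vi = matrix_inv M"
  define d where "d = gf x2 - gf x1"
  define z where "z = x2 - (1/L) *\<^sub>R (Vi *v d)"
  have "mu / 2 * (normM M (x1 - z))^2 \<le> bregman f gf z x1" using S unfolding in_S11_def by blast
  moreover have "0 \<le> mu / 2 * (normM M (x1 - z))^2" using mu by simp
  ultimately have h1: "0 \<le> bregman f gf z x1" by linarith
  have "bregman f gf z x2 \<le> L / 2 * (normM M (x2 - z))^2" using S unfolding in_S11_def by blast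
  also have "(normM M (x2 - z))^2 = (1/L)^2 * sq_normM M (Vi *v d)"
    unfolding norm_sq[OF spd] z_def by (simp add: sq_scale)
  also have "sq_normM M (Vi *v d) = (Vi *v d) \<bullet> d"
    unfolding sq_normM_def Vi_def by (simp add: matrix_vector_mul_assoc spd_inv[OF spd] inner_commute)
  finally have h2: "bregman f gf z x2 \<le> 1/(2*L) * ((Vi *v d) \<bullet> d)"
    using L by (simp add: power2_eq_square field_simps)
  have i1: "gf x1 \<bullet> (z - x1) = gf x1 \<bullet> (x2 - x1) - (1/L) * (gf x1 \<bullet> (Vi *v d))"
    unfolding z_def by (simp add: inner_diff_right)
  have i2: "gf x2 \<bullet> (z - x2) = - (1/L) * (gf x2 \<bullet> (Vi *v d))"
    unfolding z_def by (simp add: inner_diff_right)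
  have i3: "gf x2 \<bullet> (Vi *v d) - gf x1 \<bullet> (Vi *v d) = (Vi *v d) \<bullet> d"
    unfolding d_def by (simp add: inner_diff_left inner_commute)
  have "(1/L) * (gf x2 \<bullet> (Vi *v d)) - (1/L) * (gf x1 \<bullet> (Vi *v d)) = (1/L) * ((Vi *v d) \<bullet> d)"
    using i3 by (metis right_diff_distrib)
  moreover have "1/(2*L) * ((Vi *v d) \<bullet> d) = (1/L) * ((Vi *v d) \<bullet> d) - 1/(2*L) * ((Vi *v d) \<bullet> d)"
    using L by (simp add: field_simps)
  ultimately show ?thesis using h1 h2 i1 i2 unfolding bregman_def Vi_def[symmetric] d_def[symmetric]
    by linarith
qed

lemma cocoer:
  fixes f :: "real^'n \<Rightarrow> real" and M :: "real^'n^'n"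
  assumes S: "in_S11 f gf M mu L" and spd: "SPD M" and mu: "0 < mu" and L: "0 < L"
  shows "(matrix_inv M *v (gf x2 - gf x1)) \<bullet> (gf x2 - gf x1) \<le> L * ((gf x2 - gf x1) \<bullet> (x2 - x1))"
proof -
  have a: "bregman f gf x2 x1 \<ge> 1/(2*L) * ((matrix_inv M *v (gf x2 - gf x1)) \<bullet> (gf x2 - gf x1))"
    by (rule cocoer_half[OF assms])
  have b: "bregman f gf x1 x2 \<ge> 1/(2*L) * ((matrix_inv M *v (gf x1 - gf x2)) \<bullet> (gf x1 - gf x2))"
    by (rule cocoer_half[OF assms])
  have "gf x1 - gf x2 = (-1) *\<^sub>R (gf x2 - gf x1)" by simp
  hence "(matrix_inv M *v (gf x1 - gf x2)) \<bullet> (gf x1 - gf x2) = (matrix_inv M *v (gf x2 - gf x1)) \<bullet> (gf x2 - gf x1)"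
    by (simp only: matrix_vector_mult_scaleR inner_scaleR_left inner_scaleR_right)
  hence "1/L * ((matrix_inv M *v (gf x2 - gf x1)) \<bullet> (gf x2 - gf x1)) \<le> (gf x2 - gf x1) \<bullet> (x2 - x1)"
    using a b breg_sum[of f gf x2 x1] by simp
  thus ?thesis using L by (simp add: field_simps)
qed

lemma sq_diff:
  fixes M :: "real^'n^'n"
  assumes "transpose M = M"
  shows "sq_normM M a - sq_normM M b = 2 * ((M *v a) \<bullet> (a - b)) - sq_normM M (a - b)"
proof -
  have "(M *v (a - b)) \<bullet> a = (M *v a) \<bullet> (a - b)"
    using dot_transp[of M "a - b" a] assms inner_commute[of "a - b"] by simp
  moreover have "(M *v b) \<bullet> (a - b) = (M *v (a - b)) \<bullet> b"
    using dot_transp[of M "b" "a - b"] assms inner_commute[of "b"] by simp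
  ultimately show ?thesis unfolding sq_normM_def
    by (simp add: matrix_vector_mult_diff_distrib inner_diff_left inner_diff_right)
qed

lemma half_sum:
  fixes m a b1 b2 c :: real
  assumes "m/2 * a \<le> b1" "m/2 * a \<le> b2" "b2 + b1 = c"
  shows "m * a \<le> c"
proof -
  have "m * a = m/2 * a + m/2 * a" by simp
  thus ?thesis using assms by linarith
qed

lemma aux_eq: "- (a::real) * (P + R) = (- 2 * a * P + - 2 * a * R) / 2"
  by (simp add: algebra_simps)

lemma aux2:
  fixes N P R X X0 Y Y0 :: real
  assumes "N = (P + R) / 2" "X - X0 \<le> P" "Y - Y0 \<le> R"
  shows "X / 2 + Y / 2 - (X0 / 2 + Y0 / 2) \<le> N"
  using assms by simp

lemma arith_key:
  fixes A C S T Q X Y Lf muf muhB :: real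
  assumes A: "A \<ge> muf * X" and CO: "T \<le> Lf * A" and CS: "0 \<le> Lf^2 * S + 2 * Lf * Q + T"
    and C: "C \<ge> 0" and HB: "C + S \<ge> muhB * Y" and L: "0 < Lf" "Lf < 2"
    and X: "0 \<le> X" and Y: "0 \<le> Y" and mh: "0 < muhB" and mf: "0 < muf"
  shows "A + C + S + Q \<ge> min muf ((2 - Lf) * muhB) / 2 * (X + Y)"
proof -
  have "2 * Lf * Q \<ge> - (Lf^2 * S) - Lf * A" using CS CO by linarith
  hence "2 * Lf * Q \<ge> Lf * (- Lf * S - A)" by (simp add: power2_eq_square algebra_simps)
  hence "2 * Q \<ge> - Lf * S - A" using L by (simp add: mult.assoc)
  hence "A + C + S + Q \<ge> A / 2 + C + (1 - Lf / 2) * S" by (simp add: algebra_simps)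
  moreover have "C \<ge> (1 - Lf/2) * C" using C L by (simp add: mult_left_le_one_le)
  moreover have "(1 - Lf/2) * (C + S) \<ge> (1 - Lf/2) * (muhB * Y)" using HB L by (intro mult_left_mono) auto
  moreover have "A / 2 \<ge> muf / 2 * X" using A by simp
  moreover have "muf / 2 * X \<ge> min muf ((2 - Lf) * muhB) / 2 * X" using X by (intro mult_right_mono) auto
  moreover have "(1 - Lf/2) * (muhB * Y) \<ge> min muf ((2 - Lf) * muhB) / 2 * Y"
  proof -
    have "(1 - Lf/2) * (muhB * Y) = ((2 - Lf) * muhB) / 2 * Y" by (simp add: algebra_simps)
    moreover have "min muf ((2 - Lf) * muhB) / 2 * Y \<le> ((2 - Lf) * muhB) / 2 * Y"
      using Y by (intro mult_right_mono) auto
    ultimately show ?thesis by linarith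
  qed
  moreover have "min muf ((2 - Lf) * muhB) / 2 * (X + Y) = min muf ((2 - Lf) * muhB) / 2 * X + min muf ((2 - Lf) * muhB) / 2 * Y"
    by (simp add: algebra_simps)
  moreover have "(1 - Lf/2) * (C + S) = (1 - Lf/2) * C + (1 - Lf/2) * S" by (simp add: algebra_simps)
  ultimately show ?thesis by linarith
qed

theorem theorem4p1:
  fixes f :: "real^'m \<Rightarrow> real" and gf :: "real^'m \<Rightarrow> real^'m"
    and h :: "real^'n \<Rightarrow> real" and gh :: "real^'n \<Rightarrow> real^'n"
    and B :: "real^'m^'n" and IV :: "real^'m^'m" and IQ :: "real^'n^'n"
    and us :: "real^'m" and ps :: "real^'n"
    and muf Lf muhB :: real
    and u :: "nat \<Rightarrow> real^'m" and p :: "nat \<Rightarrow> real^'n" and \<alpha> :: "nat \<Rightarrow> real"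
  assumes mn: "CARD('n) \<le> CARD('m)"
    and rankB: "rank B = CARD('n)"
    and f_convex: "convex_on UNIV f" and h_convex: "convex_on UNIV h"
    and f_grad: "is_gradient f gf" and h_grad: "is_gradient h gh"
    and gf_cont: "continuous_on UNIV gf" and gh_cont: "continuous_on UNIV gh"
    and gf_lip: "\<exists>L. L-lipschitz_on UNIV gf" and gh_lip: "\<exists>L. L-lipschitz_on UNIV gh"
    and saddle1: "gf us + transpose B *v ps = 0"
    and saddle2: "B *v us = gh ps"
    and IV_spd: "SPD IV" and IQ_spd: "SPD IQ"
    and f_S11: "in_S11 f gf IV muf Lf"
    and muf_pos: "0 < muf" and muf_Lf: "muf \<le> Lf" and Lf_lt2: "Lf < 2"
    and hB_sc: "strongly_convex_wrt (hB h B IV) (grad_hB gh B IV) IQ muhB"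
    and muhB_pos: "0 < muhB"
    and alpha_pos: "\<And>k. 0 < \<alpha> k"
    and step_u: "\<And>k. u (Suc k) = u k + \<alpha> k *\<^sub>R Gu gf B IV (u (Suc k)) (p (Suc k))"
    and step_p: "\<And>k. p (Suc k) = p k + \<alpha> k *\<^sub>R Gp gf gh B IV IQ (u (Suc k)) (p (Suc k))"
  shows "\<forall>k. lyap IV IQ us ps (u (Suc k)) (p (Suc k))
            \<le> 1 / (1 + \<alpha> k * min muf ((2 - Lf) * muhB)) * lyap IV IQ us ps (u k) (p k)"
proof
  fix k
  define Vi where "Vi = matrix_inv IV"
  define u0 where "u0 = u k"
  define u1 where "u1 = u (Suc k)"
  define p0 where "p0 = p k"
  define p1 where "p1 = p (Suc k)"
  define a where "a = \<alpha> k"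
  define x where "x = u1 - us"
  define y where "y = p1 - ps"
  define g where "g = gf u1 - gf us"
  define w where "w = transpose B *v y"
  define hd where "hd = gh p1 - gh ps"
  define X where "X = sq_normM IV x"
  define Y where "Y = sq_normM IQ y"
  define \<mu> where "\<mu> = min muf ((2 - Lf) * muhB)"
  have a_pos: "0 < a" unfolding a_def by (rule alpha_pos)
  have Lf_pos: "0 < Lf" using muf_pos muf_Lf by linarith
  have IVs: "transpose IV = IV" and IQs: "transpose IQ = IQ" using IV_spd IQ_spd unfolding SPD_def by auto
  note ivi = spd_inv[OF IV_spd, folded Vi_def]
  note iqi = spd_inv[OF IQ_spd]
  have E1: "IV *v (u1 - u0) = - (a *\<^sub>R (gf u1 + transpose B *v p1))"
  proof -
    have "u1 - u0 = a *\<^sub>R Gu gf B IV u1 p1" using step_u[of k] unfolding u1_def u0_def p1_def a_def by (metis add_diff_cancel_left')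
    hence "IV *v (u1 - u0) = a *\<^sub>R (IV *v Gu gf B IV u1 p1)" by (simp add: matrix_vector_mult_scaleR)
    also have "IV *v Gu gf B IV u1 p1 = - (gf u1 + transpose B *v p1)"
      unfolding Gu_def Vi_def[symmetric]
      by (simp only: matrix_vector_mul_assoc ivi matrix_vector_mul_lid
           matrix_vector_mult_scaleR[of IV "-1", simplified] )
    finally show ?thesis by (simp add: algebra_simps)
  qed
  have E2: "IQ *v (p1 - p0) = - (a *\<^sub>R (grad_hB gh B IV p1 - B *v e_map gf IV u1))"
  proof -
    have "p1 - p0 = a *\<^sub>R Gp gf gh B IV IQ u1 p1" using step_p[of k] unfolding u1_def p0_def p1_def a_def by (metis add_diff_cancel_left')
    hence "IQ *v (p1 - p0) = a *\<^sub>R (IQ *v Gp gf gh B IV IQ u1 p1)" by (simp add: matrix_vector_mult_scaleR)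
    also have "IQ *v Gp gf gh B IV IQ u1 p1 = - (grad_hB gh B IV p1 - B *v e_map gf IV u1)"
      unfolding Gp_def
      by (simp only: matrix_vector_mul_assoc iqi matrix_vector_mul_lid
           matrix_vector_mult_scaleR[of IQ "-1", simplified] )
    finally show ?thesis by (simp add: algebra_simps)
  qed
  have gfus: "gf us = - (transpose B *v ps)" using saddle1 by (simp add: eq_neg_iff_add_eq_0)
  have S1: "gf u1 + transpose B *v p1 = g + w"
    unfolding g_def w_def y_def gfus by (simp add: matrix_vector_mult_diff_distrib)
  have S2: "grad_hB gh B IV p1 - B *v e_map gf IV u1 = hd + B *v (Vi *v w) - B *v x + B *v (Vi *v g)"
    unfolding grad_hB_def e_map_def hd_def w_def x_def g_def y_def Vi_def gfus saddle2[symmetric]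
    by (simp add: matrix_vector_mul_assoc[symmetric] matrix_vector_mult_diff_distrib matrix_vector_right_distrib algebra_simps)
  have SH: "grad_hB gh B IV p1 - grad_hB gh B IV ps = hd + B *v (Vi *v w)"
    unfolding grad_hB_def hd_def w_def y_def Vi_def
    by (simp add: matrix_vector_mul_assoc[symmetric] matrix_vector_mult_diff_distrib matrix_vector_right_distrib algebra_simps)
  have I1: "x \<bullet> w = y \<bullet> (B *v x)" using dot_transp[of B x y] unfolding w_def by (simp add: inner_commute)
  have I2: "y \<bullet> (B *v (Vi *v w)) = (Vi *v w) \<bullet> w" using dot_transp[of B "Vi *v w" y] unfolding w_def by (simp add: inner_commute)
  have I3: "y \<bullet> (B *v (Vi *v g)) = (Vi *v g) \<bullet> w" using dot_transp[of B "Vi *v g" y] unfolding w_def by (simp add: inner_commute)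
  have I4: "(Vi *v w) \<bullet> g = (Vi *v g) \<bullet> w" using dot_transp[of Vi w g] ivi(3) by (simp add: inner_commute)
  define expr where "expr = x \<bullet> (gf u1 + transpose B *v p1) + y \<bullet> (grad_hB gh B IV p1 - B *v e_map gf IV u1)"
  have expr_eq: "expr = g \<bullet> x + hd \<bullet> y + (Vi *v w) \<bullet> w + (Vi *v g) \<bullet> w"
    unfolding expr_def S1 S2 using I1 I2 I3
    by (simp add: inner_add_right inner_diff_right inner_commute)
  have A: "g \<bullet> x \<ge> muf * X"
  proof -
    have "muf / 2 * (normM IV (u1 - us))^2 \<le> bregman f gf us u1" using f_S11 unfolding in_S11_def by blast
    moreover have "muf / 2 * (normM IV (us - u1))^2 \<le> bregman f gf u1 us" using f_S11 unfolding in_S11_def by blast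
    moreover have "muf * sq_normM IV (u1 - us) = muf / 2 * sq_normM IV (u1 - us) + muf / 2 * sq_normM IV (u1 - us)" by simp
    ultimately show ?thesis using breg_sum[of f gf u1 us] sq_neg[of IV us u1]
      unfolding norm_sq[OF IV_spd] X_def x_def g_def by (smt (verit))
  qed
  have CO: "(Vi *v g) \<bullet> g \<le> Lf * (g \<bullet> x)"
    using cocoer[OF f_S11 IV_spd muf_pos Lf_pos, of u1 us] unfolding Vi_def g_def x_def .
  have C: "hd \<bullet> y \<ge> 0"
    using convex_breg[OF h_convex h_grad, of p1 ps] convex_breg[OF h_convex h_grad, of ps p1]
      breg_sum[of h gh p1 ps] unfolding hd_def y_def by linarith
  have HB: "hd \<bullet> y + (Vi *v w) \<bullet> w \<ge> muhB * Y"
  proof -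
    have b1: "muhB / 2 * sq_normM IQ (p1 - ps) \<le> bregman (hB h B IV) (grad_hB gh B IV) ps p1"
      using hB_sc unfolding strongly_convex_wrt_def norm_sq[OF IQ_spd] by blast
    have b2: "muhB / 2 * sq_normM IQ (p1 - ps) \<le> bregman (hB h B IV) (grad_hB gh B IV) p1 ps"
      using hB_sc sq_neg[of IQ ps p1] unfolding strongly_convex_wrt_def norm_sq[OF IQ_spd] by metis
    have "(grad_hB gh B IV p1 - grad_hB gh B IV ps) \<bullet> y \<ge> muhB * Y"
      unfolding Y_def y_def by (rule half_sum[OF b1 b2 breg_sum])
    hence "muhB * Y \<le> y \<bullet> hd + y \<bullet> (B *v (Vi *v w))" unfolding SH by (simp add: inner_commute inner_add_right)
    thus ?thesis using I2 by (simp add: inner_commute)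
  qed
  have CS: "0 \<le> Lf^2 * ((Vi *v w) \<bullet> w) + 2 * Lf * ((Vi *v g) \<bullet> w) + (Vi *v g) \<bullet> g"
  proof -
    have "0 \<le> (Vi *v (Lf *\<^sub>R w + g)) \<bullet> (Lf *\<^sub>R w + g)" using inv_psd[OF IV_spd] unfolding Vi_def .
    also have "\<dots> = Lf^2 * ((Vi *v w) \<bullet> w) + Lf * ((Vi *v g) \<bullet> w) + Lf * ((Vi *v w) \<bullet> g) + (Vi *v g) \<bullet> g"
      by (simp add: matrix_vector_right_distrib matrix_vector_mult_scaleR inner_add_left inner_add_right power2_eq_square algebra_simps)
    finally show ?thesis using I4 by simp
  qed
  have Xnn: "0 \<le> X" unfolding X_def by (rule sq_nonneg[OF IV_spd])
  have Ynn: "0 \<le> Y" unfolding Y_def by (rule sq_nonneg[OF IQ_spd])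
  have key: "expr \<ge> \<mu> / 2 * (X + Y)"
    unfolding expr_eq \<mu>_def
    by (rule arith_key[OF A CO CS C HB Lf_pos Lf_lt2 Xnn Ynn muhB_pos muf_pos])
  have X0: "sq_normM IV x - sq_normM IV (u0 - us) \<le> - 2 * a * (x \<bullet> (gf u1 + transpose B *v p1))"
  proof -
    have "sq_normM IV x - sq_normM IV (u0 - us) = 2 * ((IV *v x) \<bullet> (u1 - u0)) - sq_normM IV (u1 - u0)"
      using sq_diff[OF IVs, of x "u0 - us"] unfolding x_def by simp
    moreover have "(IV *v x) \<bullet> (u1 - u0) = - a * (x \<bullet> (gf u1 + transpose B *v p1))"
      using dot_transp[of IV x "u1 - u0"] unfolding IVs E1 by simp
    ultimately show ?thesis using sq_nonneg[OF IV_spd, of "u1 - u0"] by linarith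
  qed
  have Y0: "sq_normM IQ y - sq_normM IQ (p0 - ps) \<le> - 2 * a * (y \<bullet> (grad_hB gh B IV p1 - B *v e_map gf IV u1))"
  proof -
    have "sq_normM IQ y - sq_normM IQ (p0 - ps) = 2 * ((IQ *v y) \<bullet> (p1 - p0)) - sq_normM IQ (p1 - p0)"
      using sq_diff[OF IQs, of y "p0 - ps"] unfolding y_def by simp
    moreover have "(IQ *v y) \<bullet> (p1 - p0) = - a * (y \<bullet> (grad_hB gh B IV p1 - B *v e_map gf IV u1))"
      using dot_transp[of IQ y "p1 - p0"] unfolding IQs E2 by simp
    ultimately show ?thesis using sq_nonneg[OF IQ_spd, of "p1 - p0"] by linarith
  qed
  define E0 where "E0 = lyap IV IQ us ps u0 p0"
  define E1 where "E1 = lyap IV IQ us ps u1 p1"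
  have E1_eq: "E1 = X / 2 + Y / 2" unfolding E1_def lyap_def norm_sq[OF IV_spd] norm_sq[OF IQ_spd] X_def Y_def x_def y_def by simp
  have E0_eq: "E0 = sq_normM IV (u0 - us) / 2 + sq_normM IQ (p0 - ps) / 2"
    unfolding E0_def lyap_def norm_sq[OF IV_spd] norm_sq[OF IQ_spd] by simp
  have "- a * expr = (- 2 * a * (x \<bullet> (gf u1 + transpose B *v p1)) + - 2 * a * (y \<bullet> (grad_hB gh B IV p1 - B *v e_map gf IV u1))) / 2"
    unfolding expr_def by (rule aux_eq)
  hence "E1 - E0 \<le> - a * expr" unfolding E1_eq E0_eq X_def Y_def by (rule aux2[OF _ X0 Y0])
  also have "\<dots> \<le> - a * (\<mu> * E1)"
  proof -
    have "\<mu> * E1 \<le> expr" using key unfolding E1_eq by (simp add: algebra_simps)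
    hence "a * (\<mu> * E1) \<le> a * expr" using a_pos by (intro mult_left_mono) auto
    thus ?thesis by simp
  qed
  finally have fin: "E1 * (1 + a * \<mu>) \<le> E0" by (simp add: algebra_simps)
  have mupos: "0 < \<mu>" unfolding \<mu>_def using muf_pos muhB_pos Lf_lt2 by simp
  hence "0 < 1 + a * \<mu>" using a_pos by (simp add: add_pos_pos)
  hence "E1 \<le> E0 / (1 + a * \<mu>)" using fin by (simp add: pos_le_divide_eq)
  thus "lyap IV IQ us ps (u (Suc k)) (p (Suc k))
            \<le> 1 / (1 + \<alpha> k * min muf ((2 - Lf) * muhB)) * lyap IV IQ us ps (u k) (p k)"
    unfolding E1_def E0_def u1_def p1_def u0_def p0_def a_def \<mu>_def by simp
qed

end
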